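(* Fix $\theta\in\mathcal C$ (and $\lambda>0$, $p\in[1,\infty]$, $\alpha\in(0,1]$). Then: (i) For every $\phi\in\mathcal C$, $\operatorname{dist}_{\beta^{BK}_{\theta,\lambda,p,\alpha}}(\phi,\mathcal X\setminus\mathcal C)=\beta(\phi,\theta)$. (ii) $\overline{\mathcal X\setminus\mathcal C}^{\,\beta^{BK}_{\theta,\lambda,p,\alpha}}\cap \mathcal C=\{\theta\}$. (iii) $\mathcal C$ is $\beta^{BK}_{\theta,\lambda,p,\alpha}$-closed in $\mathcal X$, and $\overline{\mathcal X\setminus\mathcal C}^{\,\beta^{BK}_{\theta,\lambda,p,\alpha}}=(\mathcal X\setminus\mathcal C)\cup\{\theta\}$.
   Context: Let $A$ be a unital $C^*$-algebra, $H$ a Hilbert space, $\mathcal X=\mathrm{CB}(A,B(H))$, $\mathcal C=\mathrm{CP}(A,B(H))$, $\beta$ the Bures distance on $\mathcal C$, $\delta_{\mathrm{reg}}$ the regular-representation metric on $\mathcal X$, $\rho(\phi)=\delta_{\mathrm{reg}}(\phi,0)$ (so $\rho(\phi)\le\|\phi\|_{cb}^{1/2}$ and $\rho(\phi)>0$ for $\phi\neq0$). The BK metric $\beta^{BK}_{\theta,\lambda,p,\alpha}$ satisfies: it equals $\beta$ on $\mathcal C\times\mathcal C$, $\lambda\delta_{\mathrm{reg}}^\alpha$ on pairs of non-CP maps, and $\|(\beta(\phi,\theta),\lambda\rho(\psi)^\alpha)\|_{\ell^p}$ for $\phi\in\mathcal C$, $\psi\notin\mathcal C$ (it is defined as $\bigl\|\bigl(\|\kappa_\theta(\phi)-\kappa_\theta(\psi)\|_\infty,\lambda\widetilde\delta_{\mathrm{reg}}(\phi,\psi)^\alpha\bigr)\bigr\|_{\ell^p}$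 with $\kappa_\theta$ the Kuratowski embedding based at $\theta$, extended by $0$ off $\mathcal C$). *)

theory Defs
  imports "HOL-Analysis.Analysis"
begin

text \<open>The ambient space
  X = CB(A,B(H)) with the cb-norm is modelled by a type 'x of class
  real_normed_vector; C = CP(A,B(H)) is a subset of it; the Bures distance
  beta is a metric on C; the regular-representation metric delta is a metric on X.\<close>

definition lp_pair :: "ereal \<Rightarrow> real \<Rightarrow> real \<Rightarrow> real" where
  "lp_pair p a b =
     (if p = \<infinity> then max \<bar>a\<bar> \<bar>b\<bar>
      else (\<bar>a\<bar> powr (real_of_ereal p) + \<bar>b\<bar> powr (real_of_ereal p)) powr (1 / real_of_ereal p))"

definition kuratowski :: "'x set \<Rightarrow> ('x \<Rightarrow> 'x \<Rightarrow> real) \<Rightarrow> 'x \<Rightarrow> 'x \<Rightarrow> 'x \<Rightarrow> real" where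
  "kuratowski C beta theta phi = (\<lambda>x. if phi \<in> C then beta x phi - beta x theta else 0)"

definition sup_norm_on :: "'x set \<Rightarrow> ('x \<Rightarrow> real) \<Rightarrow> real" where
  "sup_norm_on C f = (SUP x\<in>C. \<bar>f x\<bar>)"

definition delta_tilde :: "'x::zero set \<Rightarrow> ('x \<Rightarrow> 'x \<Rightarrow> real) \<Rightarrow> 'x \<Rightarrow> 'x \<Rightarrow> real" where
  "delta_tilde C delta phi psi =
     delta (if phi \<in> C then 0 else phi) (if psi \<in> C then 0 else psi)"

definition BK_metric ::
  "'x::zero set \<Rightarrow> ('x \<Rightarrow> 'x \<Rightarrow> real) \<Rightarrow> ('x \<Rightarrow> 'x \<Rightarrow> real) \<Rightarrow> 'x \<Rightarrow> real \<Rightarrow> ereal \<Rightarrow> real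
     \<Rightarrow> 'x \<Rightarrow> 'x \<Rightarrow> real" where
  "BK_metric C beta delta theta lam p \<alpha> phi psi =
     lp_pair p
       (sup_norm_on C (\<lambda>x. kuratowski C beta theta phi x - kuratowski C beta theta psi x))
       (lam * delta_tilde C delta phi psi powr \<alpha>)"

definition dist_to_set :: "('x \<Rightarrow> 'x \<Rightarrow> real) \<Rightarrow> 'x \<Rightarrow> 'x set \<Rightarrow> real" where
  "dist_to_set d x S = (INF y\<in>S. d x y)"

end

theory Submission
  imports Defs
begin

lemma conv_powr:
  fixes x y t q :: real
  assumes "0 \<le> x" "0 \<le> y" "0 \<le> t" "t \<le> 1" "q \<ge> 1"
  shows "((1-t)*x + t*y) powr q \<le> (1-t) * x powr q + t * y powr q"
proof -
  have sc: "(s*z) powr q \<le> s * z powr q" if "0 \<le> s" "s \<le> 1" "0 \<le> z" for s z :: real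
  proof -
    have "s powr q \<le> s powr 1" using that assms by (intro powr_mono') auto
    then have "s powr q * z powr q \<le> s * z powr q" using that by (simp add: mult_right_mono)
    then show ?thesis using that by (simp add: powr_mult)
  qed
  show ?thesis
  proof (cases "x = 0")
    case True then show ?thesis using sc[of t y] assms by simp
  next
    case x: False
    show ?thesis
    proof (cases "y = 0")
      case True then show ?thesis using sc[of "1-t" x] assms by simp
    next
      case False
      then show ?thesis using convex_onD[OF powr_convex[OF assms(5)], of t x y] assms x by simp
    qed
  qed
qed

lemma sub_powr:
  fixes a b \<alpha> :: real assumes "a \<ge> 0" "b \<ge> 0" "0 < \<alpha>" "\<alpha> \<le> 1"
  shows "(a + b) powr \<alpha> \<le> a powr \<alpha> + b powr \<alpha>"
proof (cases "a + b = 0")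
  case True then have "a = 0" "b = 0" using assms by auto
  then show ?thesis by simp
next
  case False
  define s where "s = a + b"
  have s: "s > 0" using False assms s_def by simp
  have "(a/s) powr 1 \<le> (a/s) powr \<alpha>"
    using assms s by (intro powr_mono') (auto simp: s_def field_simps)
  moreover have "(b/s) powr 1 \<le> (b/s) powr \<alpha>"
    using assms s by (intro powr_mono') (auto simp: s_def field_simps)
  moreover have "a/s + b/s = 1" using s by (simp add: s_def add_divide_distrib[symmetric])
  ultimately have "1 \<le> (a/s) powr \<alpha> + (b/s) powr \<alpha>"
    using assms s by simp
  then have "1 \<le> (a powr \<alpha> + b powr \<alpha>) / s powr \<alpha>"
    using assms s by (simp add: powr_divide add_divide_distrib)
  then show ?thesis using s by (simp add: s_def)
qed

lemma mink_q:
  fixes a1 a2 b1 b2 q :: real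
  assumes "a1 \<ge> 0" "a2 \<ge> 0" "b1 \<ge> 0" "b2 \<ge> 0" "q \<ge> 1"
  shows "((a1+a2) powr q + (b1+b2) powr q) powr (1/q)
        \<le> (a1 powr q + b1 powr q) powr (1/q) + (a2 powr q + b2 powr q) powr (1/q)"
proof -
  define A where "A = (a1 powr q + b1 powr q) powr (1/q)"
  define B where "B = (a2 powr q + b2 powr q) powr (1/q)"
  have q: "q > 0" using assms by simp
  have Ap: "A powr q = a1 powr q + b1 powr q" using q by (simp add: A_def powr_powr)
  have Bp: "B powr q = a2 powr q + b2 powr q" using q by (simp add: B_def powr_powr)
  have A0: "A \<ge> 0" "B \<ge> 0" by (simp_all add: A_def B_def)
  show ?thesis
  proof (cases "A = 0")
    case True
    then have "a1 powr q + b1 powr q = 0" using Ap q by simp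
    then have "a1 = 0" "b1 = 0" using assms by (smt (verit) powr_ge_zero powr_eq_0_iff)+
    then show ?thesis by (simp add: B_def)
  next
    case An: False
    show ?thesis
    proof (cases "B = 0")
      case True
      then have "a2 powr q + b2 powr q = 0" using Bp q by simp
      then have "a2 = 0" "b2 = 0" using assms by (smt (verit) powr_ge_zero powr_eq_0_iff)+
      then show ?thesis by (simp add: A_def)
    next
      case Bn: False
      have Apos: "A > 0" "B > 0" using An Bn A0 by auto
      define t where "t = B / (A + B)"
      have t: "0 \<le> t" "t \<le> 1" using Apos by (auto simp: t_def)
      have omt: "1 - t = A / (A + B)" using Apos by (simp add: t_def field_simps)
      have dec: "(c1 + c2) / (A + B) = (1-t) * (c1/A) + t * (c2/B)" for c1 c2
      proof -
        have "(1-t) * (c1/A) = c1/(A+B)" using Apos unfolding omt by (simp add: field_simps)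
        moreover have "t * (c2/B) = c2/(A+B)" using Apos unfolding t_def by (simp add: field_simps)
        ultimately show ?thesis by (simp add: add_divide_distrib)
      qed
      have ia: "((a1+a2)/(A+B)) powr q \<le> (1-t) * (a1/A) powr q + t * (a2/B) powr q"
        unfolding dec using assms Apos t by (intro conv_powr) auto
      have ib: "((b1+b2)/(A+B)) powr q \<le> (1-t) * (b1/A) powr q + t * (b2/B) powr q"
        unfolding dec using assms Apos t by (intro conv_powr) auto
      have nA: "(a1/A) powr q + (b1/A) powr q = 1"
        using Apos assms by (simp add: powr_divide Ap[symmetric] add_divide_distrib[symmetric])
      have nB: "(a2/B) powr q + (b2/B) powr q = 1"
        using Apos assms by (simp add: powr_divide Bp[symmetric] add_divide_distrib[symmetric])
      have "((a1+a2)/(A+B)) powr q + ((b1+b2)/(A+B)) powr q \<le> (1-t) * 1 + t * 1"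
        using ia ib nA nB by (simp add: algebra_simps) (smt (verit) distrib_left)
      then have "((a1+a2) powr q + (b1+b2) powr q) / (A+B) powr q \<le> 1"
        using Apos assms by (simp only: powr_divide add_divide_distrib[symmetric]) (auto simp: powr_divide)
      then have "(a1+a2) powr q + (b1+b2) powr q \<le> (A+B) powr q"
        using Apos by (simp add: divide_le_eq_1)
      then have "((a1+a2) powr q + (b1+b2) powr q) powr (1/q) \<le> ((A+B) powr q) powr (1/q)"
        using q by (intro powr_mono2) auto
      also have "\<dots> = A + B" using q Apos by (simp add: powr_powr)
      finally show ?thesis by (simp add: A_def B_def)
    qed
  qed
qed

lemma sum_powr_le:
  fixes a b q :: real assumes "a \<ge> 0" "b \<ge> 0" "q \<ge> 1"
  shows "a powr q + b powr q \<le> (a + b) powr q"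
proof (cases "a + b = 0")
  case True then have "a = 0" "b = 0" using assms by auto
  then show ?thesis by simp
next
  case False
  define s where "s = a + b"
  have s: "s > 0" using False assms s_def by simp
  have "(a/s) powr q \<le> (a/s) powr 1"
    using assms s by (intro powr_mono') (auto simp: s_def field_simps)
  moreover have "(b/s) powr q \<le> (b/s) powr 1"
    using assms s by (intro powr_mono') (auto simp: s_def field_simps)
  moreover have "a/s + b/s = 1" using s by (simp add: s_def add_divide_distrib[symmetric])
  ultimately have "(a/s) powr q + (b/s) powr q \<le> 1"
    using assms s by simp
  then have "(a powr q + b powr q) / s powr q \<le> 1"
    using assms s by (simp add: powr_divide add_divide_distrib)
  then show ?thesis using s by (simp add: s_def)
qed

lemma lp_ge1: assumes "p \<ge> 1" shows "lp_pair p a b \<ge> \<bar>a\<bar>"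
proof (cases "p = \<infinity>")
  case True then show ?thesis by (simp add: lp_pair_def)
next
  case False
  define q where "q = real_of_ereal p"
  have q: "q \<ge> 1" using assms False by (cases p) (auto simp: q_def)
  have "\<bar>a\<bar> = (\<bar>a\<bar> powr q) powr (1/q)" using q by (simp add: powr_powr)
  also have "\<dots> \<le> (\<bar>a\<bar> powr q + \<bar>b\<bar> powr q) powr (1/q)"
    using q by (intro powr_mono2) auto
  finally show ?thesis using False by (simp add: lp_pair_def q_def)
qed

lemma lp_ge2: assumes "p \<ge> 1" shows "lp_pair p a b \<ge> \<bar>b\<bar>"
proof -
  have "lp_pair p a b = lp_pair p b a" by (simp add: lp_pair_def add.commute max.commute)
  then show ?thesis using lp_ge1[OF assms, of b a] by simp
qed

lemma lp_le: assumes "p \<ge> 1" shows "lp_pair p a b \<le> \<bar>a\<bar> + \<bar>b\<bar>"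
proof (cases "p = \<infinity>")
  case True then show ?thesis by (simp add: lp_pair_def)
next
  case False
  define q where "q = real_of_ereal p"
  have q: "q \<ge> 1" using assms False by (cases p) (auto simp: q_def)
  have "(\<bar>a\<bar> powr q + \<bar>b\<bar> powr q) powr (1/q) \<le> ((\<bar>a\<bar> + \<bar>b\<bar>) powr q) powr (1/q)"
    using q by (intro powr_mono2 sum_powr_le) auto
  also have "\<dots> = \<bar>a\<bar> + \<bar>b\<bar>" using q by (simp add: powr_powr)
  finally show ?thesis using False by (simp add: lp_pair_def q_def)
qed



lemma lp_mono:
  assumes "p \<ge> 1" "0 \<le> a" "a \<le> a'" "0 \<le> b" "b \<le> b'"
  shows "lp_pair p a b \<le> lp_pair p a' b'"
proof (cases "p = \<infinity>")
  case True then show ?thesis using assms by (auto simp: lp_pair_def max_def)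
next
  case False
  define q where "q = real_of_ereal p"
  have q: "q \<ge> 1" using assms False by (cases p) (auto simp: q_def)
  have "a powr q + b powr q \<le> a' powr q + b' powr q"
    using assms q by (intro add_mono powr_mono2) auto
  then have "(a powr q + b powr q) powr (1/q) \<le> (a' powr q + b' powr q) powr (1/q)"
    using q by (intro powr_mono2) auto
  then show ?thesis using False assms by (simp add: lp_pair_def q_def)
qed

lemma lp_mink:
  assumes "p \<ge> 1" "0 \<le> a1" "0 \<le> a2" "0 \<le> b1" "0 \<le> b2"
  shows "lp_pair p (a1 + a2) (b1 + b2) \<le> lp_pair p a1 b1 + lp_pair p a2 b2"
proof (cases "p = \<infinity>")
  case True then show ?thesis using assms by (auto simp: lp_pair_def max_def)
next
  case False
  define q where "q = real_of_ereal p"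
  have q: "q \<ge> 1" using assms False by (cases p) (auto simp: q_def)
  show ?thesis using mink_q[OF assms(2-5) q] False assms by (simp add: lp_pair_def q_def)
qed

theorem proposition5p6:
  fixes C :: "'x::real_normed_vector set"
    and beta delta :: "'x \<Rightarrow> 'x \<Rightarrow> real"
    and theta :: 'x and lam \<alpha> :: real and p :: ereal
  assumes cone: "\<And>phi t. phi \<in> C \<Longrightarrow> t \<ge> 0 \<Longrightarrow> scaleR t phi \<in> C"
    and pointed: "\<And>phi. phi \<in> C \<Longrightarrow> - phi \<in> C \<Longrightarrow> phi = 0"
    and nontriv: "\<exists>phi\<in>C. phi \<noteq> 0"
    and beta_metric: "Metric_space C beta"
    and delta_metric: "Metric_space UNIV delta"
    and rho_le: "\<And>phi. delta phi 0 \<le> sqrt (norm phi)"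
    and theta: "theta \<in> C"
    and lam: "lam > 0" and p: "p \<ge> 1" and \<alpha>: "0 < \<alpha>" "\<alpha> \<le> 1"
  defines "bk \<equiv> BK_metric C beta delta theta lam p \<alpha>"
  shows "(\<forall>phi\<in>C. dist_to_set bk phi (UNIV - C) = beta phi theta)
       \<and> (Metric_space.mtopology UNIV bk) closure_of (UNIV - C) \<inter> C = {theta}
       \<and> closedin (Metric_space.mtopology UNIV bk) C
       \<and> (Metric_space.mtopology UNIV bk) closure_of (UNIV - C) = (UNIV - C) \<union> {theta}"
proof -
  interpret B: Metric_space C beta by (rule beta_metric)
  interpret D: Metric_space UNIV delta by (rule delta_metric)
  have zeroC: "0 \<in> C" using cone[OF theta, of 0] by simp
  have lp0: "\<And>a. lp_pair p a 0 = \<bar>a\<bar>" using lp_ge1[OF p] lp_le[OF p]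
    by (metis abs_zero add.right_neutral order_antisym)
  have tri: "\<And>x y z. x \<in> C \<Longrightarrow> y \<in> C \<Longrightarrow> z \<in> C \<Longrightarrow> \<bar>beta x y - beta x z\<bar> \<le> beta y z"
    by (smt (verit) B.commute B.triangle)
  have supCC: "sup_norm_on C (\<lambda>x. kuratowski C beta theta phi x - kuratowski C beta theta psi x) = beta phi psi"
    if "phi \<in> C" "psi \<in> C" for phi psi
    unfolding sup_norm_on_def kuratowski_def
  proof (rule cSup_eq_maximum)
    show "beta phi psi \<in> (\<lambda>x. \<bar>(if phi \<in> C then beta x phi - beta x theta else 0) - (if psi \<in> C then beta x psi - beta x theta else 0)\<bar>) ` C"
      using that by (intro image_eqI[where x=phi]) auto
    show "\<And>y. y \<in> (\<lambda>x. \<bar>(if phi \<in> C then beta x phi - beta x theta else 0) - (if psi \<in> C then beta x psi - beta x theta else 0)\<bar>) ` C \<Longrightarrow> y \<le> beta phi psi"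
      using that tri by auto
  qed
  have supCN: "sup_norm_on C (\<lambda>x. kuratowski C beta theta phi x - kuratowski C beta theta psi x) = beta phi theta"
    if "phi \<in> C" "psi \<notin> C" for phi psi
    unfolding sup_norm_on_def kuratowski_def
  proof (rule cSup_eq_maximum)
    show "beta phi theta \<in> (\<lambda>x. \<bar>(if phi \<in> C then beta x phi - beta x theta else 0) - (if psi \<in> C then beta x psi - beta x theta else 0)\<bar>) ` C"
      using that theta by (intro image_eqI[where x=phi]) auto
    show "\<And>y. y \<in> (\<lambda>x. \<bar>(if phi \<in> C then beta x phi - beta x theta else 0) - (if psi \<in> C then beta x psi - beta x theta else 0)\<bar>) ` C \<Longrightarrow> y \<le> beta phi theta"
      using that tri theta by auto
  qed
  have supNC: "sup_norm_on C (\<lambda>x. kuratowski C beta theta phi x - kuratowski C beta theta psi x) = beta psi theta"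
    if "phi \<notin> C" "psi \<in> C" for phi psi
    unfolding sup_norm_on_def kuratowski_def
  proof (rule cSup_eq_maximum)
    show "beta psi theta \<in> (\<lambda>x. \<bar>(if phi \<in> C then beta x phi - beta x theta else 0) - (if psi \<in> C then beta x psi - beta x theta else 0)\<bar>) ` C"
      using that theta by (intro image_eqI[where x=psi]) auto
    show "\<And>y. y \<in> (\<lambda>x. \<bar>(if phi \<in> C then beta x phi - beta x theta else 0) - (if psi \<in> C then beta x psi - beta x theta else 0)\<bar>) ` C \<Longrightarrow> y \<le> beta psi theta"
      using that tri theta by (auto simp: abs_minus_commute)
  qed
  have bkCC: "bk phi psi = beta phi psi" if "phi \<in> C" "psi \<in> C" for phi psi
    using that supCC[OF that] \<alpha> unfolding bk_def BK_metric_def delta_tilde_def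
    by (simp add: lp0)
  have bkCN: "bk phi psi = lp_pair p (beta phi theta) (lam * delta 0 psi powr \<alpha>)"
    if "phi \<in> C" "psi \<notin> C" for phi psi
    using that supCN[OF that] unfolding bk_def BK_metric_def delta_tilde_def by simp
  have bkNC: "bk phi psi = lp_pair p (beta psi theta) (lam * delta phi 0 powr \<alpha>)"
    if "phi \<notin> C" "psi \<in> C" for phi psi
    using that supNC[OF that] unfolding bk_def BK_metric_def delta_tilde_def by simp
  define K where "K = kuratowski C beta theta"
  define S where "S phi psi = sup_norm_on C (\<lambda>x. K phi x - K psi x)" for phi psi
  define W where "W phi psi = lam * delta_tilde C delta phi psi powr \<alpha>" for phi psi
  have bkSW: "bk phi psi = lp_pair p (S phi psi) (W phi psi)" for phi psi
    by (simp add: bk_def BK_metric_def S_def W_def K_def)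
  have Kb: "\<bar>K phi x\<bar> \<le> (if phi \<in> C then beta phi theta else 0)" if "x \<in> C" for phi x
    using tri[OF that _ theta, of phi] that by (auto simp: K_def kuratowski_def)
  have bdd: "bdd_above ((\<lambda>x. \<bar>K phi x - K psi x\<bar>) ` C)" for phi psi
  proof (rule bdd_aboveI2)
    fix x assume "x \<in> C"
    then show "\<bar>K phi x - K psi x\<bar> \<le> (if phi \<in> C then beta phi theta else 0) + (if psi \<in> C then beta psi theta else 0)"
      using Kb[of x phi] Kb[of x psi] by linarith
  qed
  have Supper: "\<bar>K phi x - K psi x\<bar> \<le> S phi psi" if "x \<in> C" for phi psi x
    unfolding S_def sup_norm_on_def using bdd that by (rule cSUP_upper2) simp
  have S_tri: "S phi chi \<le> S phi psi + S psi chi" for phi psi chi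
    unfolding S_def[of phi chi] sup_norm_on_def
  proof (rule cSUP_least)
    show "C \<noteq> {}" using theta by blast
    fix x assume x: "x \<in> C"
    show "\<bar>K phi x - K chi x\<bar> \<le> S phi psi + S psi chi"
      using Supper[OF x, of phi psi] Supper[OF x, of psi chi] by linarith
  qed
  have S_nonneg: "S phi psi \<ge> 0" for phi psi using Supper[OF theta, of phi psi] by linarith
  have S_sym: "S phi psi = S psi phi" for phi psi
    unfolding S_def sup_norm_on_def by (simp add: abs_minus_commute)
  have W_nonneg: "W phi psi \<ge> 0" for phi psi using lam by (simp add: W_def)
  have W_sym: "W phi psi = W psi phi" for phi psi
    unfolding W_def delta_tilde_def using D.commute by simp
  have W_tri: "W phi chi \<le> W phi psi + W psi chi" for phi psi chi
  proof -
    define u where "u z = (if z \<in> C then 0 else z)" for z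
    have "delta (u phi) (u chi) \<le> delta (u phi) (u psi) + delta (u psi) (u chi)"
      by (rule D.triangle) auto
    then have "delta (u phi) (u chi) powr \<alpha> \<le> (delta (u phi) (u psi) + delta (u psi) (u chi)) powr \<alpha>"
      using \<alpha> by (intro powr_mono2) auto
    also have "\<dots> \<le> delta (u phi) (u psi) powr \<alpha> + delta (u psi) (u chi) powr \<alpha>"
      using \<alpha> by (intro sub_powr) auto
    finally show ?thesis using lam
      by (simp add: W_def delta_tilde_def u_def[abs_def] distrib_left[symmetric])
  qed
  have bk_refl: "bk phi phi = 0" for phi
  proof -
    have Cne: "C \<noteq> {}" using theta by blast
    have "(SUP x\<in>C. (0::real)) = 0" using Cne by (rule cSUP_const)
    then have "S phi phi = 0" unfolding S_def sup_norm_on_def by simp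
    moreover have "W phi phi = 0" unfolding W_def delta_tilde_def by simp
    ultimately show ?thesis by (simp add: bkSW lp0)
  qed
  have Mbk: "Metric_space UNIV bk"
  proof
    fix x y z :: 'x
    show "0 \<le> bk x y" using lp_ge1[OF p, of "S x y" "W x y"] by (simp add: bkSW)
    show "bk x y = bk y x" by (simp add: bkSW S_sym W_sym)
    show "bk x z \<le> bk x y + bk y z"
    proof -
      have "bk x z \<le> lp_pair p (S x y + S y z) (W x y + W y z)"
        unfolding bkSW using p S_tri W_tri S_nonneg W_nonneg by (intro lp_mono) auto
      also have "\<dots> \<le> bk x y + bk y z"
        unfolding bkSW using p S_nonneg W_nonneg by (intro lp_mink) auto
      finally show ?thesis .
    qed
    show "bk x y = 0 \<longleftrightarrow> x = y"
    proof
      assume h: "bk x y = 0"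
      have S0: "S x y = 0" using lp_ge1[OF p, of "S x y" "W x y"] h S_nonneg[of x y] by (simp add: bkSW)
      have "\<bar>W x y\<bar> \<le> bk x y" unfolding bkSW by (rule lp_ge2[OF p])
      then have "W x y = 0" using h W_nonneg[of x y] by linarith
      then have dz: "delta (if x \<in> C then 0 else x) (if y \<in> C then 0 else y) = 0"
        using lam by (simp add: W_def delta_tilde_def)
      show "x = y"
      proof (cases "x \<in> C")
        case xC: True
        show ?thesis
        proof (cases "y \<in> C")
          case True
          then have "beta x y = 0" using S0 supCC[OF xC True] by (simp add: S_def K_def)
          then show ?thesis using xC True by simp
        next
          case False then show ?thesis using dz xC zeroC by simp
        qed
      next
        case xN: False
        show ?thesis
        proof (cases "y \<in> C")
          case True then show ?thesis using dz xN zeroC by simp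
        next
          case False then show ?thesis using dz xN by simp
        qed
      qed
    qed (simp add: bk_refl)
  qed
  interpret M: Metric_space UNIV bk by (rule Mbk)
  have openin_gen: "openin (Metric_space.mtopology UNIV bk) U \<longleftrightarrow> (\<forall>x\<in>U. \<exists>r>0. {y. bk x y < r} \<subseteq> U)" for U
    by (simp add: M.openin_mtopology M.mball_def Ball_def)
  have topspace_gen: "topspace (Metric_space.mtopology UNIV bk) = UNIV"
    by simp
  obtain phi0 where phi0: "phi0 \<in> C" "phi0 \<noteq> 0" using nontriv by blast
  have approx: "\<exists>psi. psi \<notin> C \<and> bk phi psi < beta phi theta + e" if ph: "phi \<in> C" and e: "e > 0" for phi e
  proof -
    define \<eta> where "\<eta> = (e/lam) powr (1/\<alpha>)"
    have \<eta>: "\<eta> > 0" using e lam by (simp add: \<eta>_def)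
    have \<eta>a: "\<eta> powr \<alpha> = e/lam" using \<alpha> e lam by (simp add: \<eta>_def powr_powr)
    define t where "t = \<eta>^2 / (2 * norm phi0)"
    have t: "t > 0" using \<eta> phi0 by (simp add: t_def)
    define psi where "psi = - (t *\<^sub>R phi0)"
    have notC: "psi \<notin> C"
    proof
      assume "psi \<in> C"
      then have "(1/t) *\<^sub>R psi \<in> C" using cone t by simp
      then have "- phi0 \<in> C" using t by (simp add: psi_def)
      then show False using pointed phi0 by blast
    qed
    have np: "norm psi = \<eta>^2 / 2" using t phi0 by (simp add: psi_def t_def)
    have "delta 0 psi \<le> sqrt (norm psi)" using rho_le[of psi] D.commute[of 0 psi] by simp
    also have "\<dots> = sqrt (\<eta>^2/2)" using np by simp
    also have "\<dots> < sqrt (\<eta>^2)" using \<eta> by (simp only: real_sqrt_less_iff) simp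
    also have "\<dots> = \<eta>" using \<eta> by simp
    finally have "delta 0 psi powr \<alpha> < \<eta> powr \<alpha>" using \<alpha> by (intro powr_less_mono2) auto
    then have "lam * delta 0 psi powr \<alpha> < e" using \<eta>a lam by (simp add: field_simps)
    moreover have "bk phi psi \<le> \<bar>beta phi theta\<bar> + \<bar>lam * delta 0 psi powr \<alpha>\<bar>"
      using bkCN[OF ph notC] lp_le[OF p, of "beta phi theta" "lam * delta 0 psi powr \<alpha>"] by simp
    ultimately have "bk phi psi < beta phi theta + e" using lam by simp
    then show ?thesis using notC by blast
  qed
  have negC: "- phi0 \<notin> C" using pointed phi0 by blast
  have lower: "beta phi theta \<le> bk phi psi" if "phi \<in> C" "psi \<notin> C" for phi psi
    using bkCN[OF that] lp_ge1[OF p, of "beta phi theta"] by simp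
  have part1: "\<forall>phi\<in>C. dist_to_set bk phi (UNIV - C) = beta phi theta"
  proof
    fix phi assume ph: "phi \<in> C"
    have ne: "UNIV - C \<noteq> {}" using negC by blast
    have bdd: "bdd_below ((bk phi) ` (UNIV - C))"
      using lower[OF ph] by (intro bdd_belowI2[where m="beta phi theta"]) auto
    show "dist_to_set bk phi (UNIV - C) = beta phi theta"
      unfolding dist_to_set_def
    proof (rule antisym)
      show "(INF y\<in>UNIV - C. bk phi y) \<le> beta phi theta"
      proof (rule field_le_epsilon)
        fix e :: real assume "e > 0"
        then obtain psi where "psi \<notin> C" "bk phi psi < beta phi theta + e" using approx[OF ph] by blast
        then show "(INF y\<in>UNIV - C. bk phi y) \<le> beta phi theta + e"
          using bdd by (intro cINF_lower2[where x=psi]) auto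
      qed
      show "beta phi theta \<le> (INF y\<in>UNIV - C. bk phi y)"
        using ne lower[OF ph] by (intro cINF_greatest) auto
    qed
  qed
  let ?T = "Metric_space.mtopology UNIV bk"
  have cl_in: "theta \<in> ?T closure_of (UNIV - C)"
    unfolding in_closure_of topspace_gen
  proof (intro conjI allI impI UNIV_I)
    fix T assume "theta \<in> T \<and> openin ?T T"
    then obtain r where r: "r > 0" "{y. bk theta y < r} \<subseteq> T" unfolding openin_gen by blast
    obtain psi where "psi \<notin> C" "bk theta psi < beta theta theta + r" using approx[OF theta r(1)] by blast
    then show "\<exists>y. y \<in> UNIV - C \<and> y \<in> T" using r theta by auto
  qed
  have cl_out: "phi \<notin> ?T closure_of (UNIV - C)" if ph: "phi \<in> C" "phi \<noteq> theta" for phi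
  proof -
    define T where "T = {psi\<in>C. beta psi phi < beta phi theta / 2}"
    have pos: "beta phi theta > 0" using ph theta by simp
    have "phi \<in> T" using ph pos by (simp add: T_def)
    moreover have "T \<inter> (UNIV - C) = {}" by (auto simp: T_def)
    moreover have "openin ?T T"
      unfolding openin_gen
    proof
      fix psi assume psi: "psi \<in> T"
      then have psiC: "psi \<in> C" by (simp add: T_def)
      define r where "r = beta phi theta / 2 - beta psi phi"
      have "r > 0" using psi by (simp add: T_def r_def)
      moreover have "{y. bk psi y < r} \<subseteq> T"
      proof
        fix y assume y: "y \<in> {y. bk psi y < r}"
        show "y \<in> T"
        proof (cases "y \<in> C")
          case True
          then have "beta psi y < r" using y bkCC[OF psiC True] by simp
          moreover have "beta y phi \<le> beta y psi + beta psi phi" using True psiC ph B.triangle by blast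
          ultimately show ?thesis using True B.commute[of y psi] by (simp add: T_def r_def)
        next
          case False
          have "beta phi theta \<le> beta phi psi + beta psi theta" using ph psiC theta B.triangle by blast
          moreover have "beta psi theta \<le> bk psi y" using lower[OF psiC False] .
          ultimately have False using y B.commute[of phi psi] B.nonneg[of phi theta] by (simp add: r_def)
          then show ?thesis ..
        qed
      qed
      ultimately show "\<exists>r>0. {y. bk psi y < r} \<subseteq> T" by blast
    qed
    ultimately show ?thesis unfolding in_closure_of by blast
  qed
  have part2: "?T closure_of (UNIV - C) \<inter> C = {theta}"
    using cl_in cl_out theta by blast
  have part3: "closedin ?T C"
    unfolding closedin_def topspace_gen openin_gen
  proof (intro conjI ballI subset_UNIV)
    fix psi assume psi: "psi \<in> UNIV - C"
    then have "psi \<noteq> 0" using zeroC by blast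
    then have "delta psi 0 > 0" using D.mdist_pos_less by blast
    then have r: "lam * delta psi 0 powr \<alpha> > 0" using lam by simp
    have "{y. bk psi y < lam * delta psi 0 powr \<alpha>} \<subseteq> UNIV - C"
    proof (intro subsetI)
      fix y assume y: "y \<in> {y. bk psi y < lam * delta psi 0 powr \<alpha>}"
      have "y \<notin> C"
      proof
        assume yC: "y \<in> C"
        have "\<bar>lam * delta psi 0 powr \<alpha>\<bar> \<le> bk psi y"
          using bkNC[OF _ yC, of psi] psi lp_ge2[OF p] by simp
        then show False using y r by simp
      qed
      then show "y \<in> UNIV - C" by simp
    qed
    then show "\<exists>r>0. {y. bk psi y < r} \<subseteq> UNIV - C" using r by blast
  qed
  have part4: "?T closure_of (UNIV - C) = (UNIV - C) \<union> {theta}"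
  proof
    show "?T closure_of (UNIV - C) \<subseteq> (UNIV - C) \<union> {theta}" using cl_out by blast
    have "UNIV - C \<subseteq> ?T closure_of (UNIV - C)"
      by (rule closure_of_subset) (simp add: topspace_gen)
    then show "(UNIV - C) \<union> {theta} \<subseteq> ?T closure_of (UNIV - C)" using cl_in by blast
  qed
  show ?thesis by (intro conjI part1 part2 part3 part4)
qed

end
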